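(* Let $J$ be a probability space, $(W^{(n)})_n$ a sequence of graphons on $J$ and $W$ a graphon on $J$ with $\|W^{(n)}-W\|_{\infty\to1}\to0$. Let $u^{(n)}(0)\in L^1(J)$ converge to $u(0)\in L^1(J)$ in $L^1$. Let $u^{(n)}(t)$ and $u(t)$ be the solutions of the Kuramoto graphon systems $\dot u_x=\int_J W^{(n)}(x,y)\sin(u_y-u_x)\,d\mu(y)$ and $\dot u_x=\int_J W(x,y)\sin(u_y-u_x)\,d\mu(y)$ with these initial conditions. Then for every $t\in\mathbb{R}$, $\lim_{n\to\infty}\|u^{(n)}(t)-u(t)\|_1=0$, and the convergence is uniform in $t$ on every compact interval $[-T,T]$.
   Context: A graphon on $J=(\Omega,\mathcal A,\mu)$ is a symmetric measurable function $\Omega\times\Omega\to[0,1]$. $\|K\|_{\infty\to1}=\sup_{\|h\|_{L^\infty}\le1}\int_J\big|\int_J K(x,y)h(y)\,d\mu(y)\big|\,d\mu(x)$. *)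

theory Defs
  imports "HOL-Probability.Probability"
begin

definition graphon :: "'a measure \<Rightarrow> ('a \<Rightarrow> 'a \<Rightarrow> real) \<Rightarrow> bool" where
  "graphon M W \<longleftrightarrow>
     (\<lambda>(x, y). W x y) \<in> borel_measurable (M \<Otimes>\<^sub>M M) \<and>
     (\<forall>x\<in>space M. \<forall>y\<in>space M. W x y = W y x) \<and>
     (\<forall>x\<in>space M. \<forall>y\<in>space M. 0 \<le> W x y \<and> W x y \<le> 1)"

definition norm_inf_1 :: "'a measure \<Rightarrow> ('a \<Rightarrow> 'a \<Rightarrow> real) \<Rightarrow> real" where
  "norm_inf_1 M K =
     (SUP h\<in>{h. h \<in> borel_measurable M \<and> (AE y in M. \<bar>h y\<bar> \<le> 1)}.
        \<integral>x. \<bar>\<integral>y. K x y * h y \<partial>M\<bar> \<partial>M)"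

definition l1_dist :: "'a measure \<Rightarrow> ('a \<Rightarrow> real) \<Rightarrow> ('a \<Rightarrow> real) \<Rightarrow> real" where
  "l1_dist M f g = (\<integral>x. \<bar>f x - g x\<bar> \<partial>M)"

definition kuramoto_rhs :: "'a measure \<Rightarrow> ('a \<Rightarrow> 'a \<Rightarrow> real) \<Rightarrow> ('a \<Rightarrow> real) \<Rightarrow> 'a \<Rightarrow> real" where
  "kuramoto_rhs M W v x = (\<integral>y. W x y * sin (v y - v x) \<partial>M)"

text \<open>u is a solution (a differentiable curve t maps to u t in L1(J), defined for all
  real t) of the Kuramoto graphon system with kernel W and initial condition u0.\<close>
definition kuramoto_solution ::
  "'a measure \<Rightarrow> ('a \<Rightarrow> 'a \<Rightarrow> real) \<Rightarrow> ('a \<Rightarrow> real) \<Rightarrow> (real \<Rightarrow> 'a \<Rightarrow> real) \<Rightarrow> bool" where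
  "kuramoto_solution M W u0 u \<longleftrightarrow>
     (\<forall>t. integrable M (u t)) \<and>
     (AE x in M. u 0 x = u0 x) \<and>
     (\<forall>t. ((\<lambda>h. l1_dist M (\<lambda>x. (u (t + h) x - u t x) / h) (kuramoto_rhs M W (u t)))
            \<longlongrightarrow> 0) (at 0))"

end

theory Submission
  imports Defs
begin

lemma exp_small: fixes h :: real assumes "0 < h" "h < 1/15" shows "exp (-3*h) < 1 - 5/2*h"
proof -
  have "1 + 3*h \<le> exp (3*h)" using exp_ge_add_one_self by simp
  hence "exp (-3*h) \<le> 1/(1+3*h)" using assms by (simp add: exp_minus field_simps)
  also have "1/(1+3*h) < 1 - 5/2*h"
  proof -
    have "1 < (1+3*h)*(1 - 5/2*h)" using assms by (simp add: algebra_simps power2_eq_square)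
    thus ?thesis using assms by (simp add: field_simps)
  qed
  finally show ?thesis .
qed

lemma gronwall_fwd:
  fixes e :: "real \<Rightarrow> real" and c :: real
  assumes nn: "\<And>t. 0 \<le> e t" and c: "0 \<le> c"
    and est: "\<And>t \<epsilon>. \<epsilon> > 0 \<Longrightarrow> \<exists>d>0. \<forall>h. \<bar>h\<bar> < d \<longrightarrow> \<bar>e (t+h) - e t\<bar> \<le> \<bar>h\<bar> * (2 * e t + 2 * c + \<epsilon>)"
    and t: "0 \<le> t"
  shows "e t \<le> (e 0 + c) * exp (3*t)"
proof -
  have main: "e t \<le> (e 0 + c + \<eta>) * exp (3*t) - c" if eta: "\<eta> > 0" for \<eta>
  proof (rule ccontr)
    assume nt: "\<not> ?thesis"
    define K where "K = e 0 + c + \<eta>"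
    have K: "K > 0" using nn[of 0] c eta by (simp add: K_def)
    define G where "G r = K * exp (3*r) - c" for r
    have Gmono: "G r \<le> G r'" if "r \<le> r'" for r r' using that K by (simp add: G_def)
    define S where "S = {r. 0 \<le> r \<and> G r \<le> e r}"
    have tS: "t \<in> S" using nt t by (simp add: S_def G_def K_def)
    have bdd: "bdd_below S" by (auto simp: S_def bdd_below_def)
    define s where "s = Inf S"
    have s0: "0 \<le> s" unfolding s_def using tS by (intro cInf_greatest) (auto simp: S_def)
    have below: "e r < G r" if "0 \<le> r" "r < s" for r
    proof (rule ccontr)
      assume "\<not> e r < G r" hence "r \<in> S" using that by (simp add: S_def)
      hence "s \<le> r" unfolding s_def using bdd by (rule cInf_lower)
      thus False using that by simp
    qed
    obtain d1 where d1: "d1 > 0" "\<And>h. \<bar>h\<bar> < d1 \<Longrightarrow> \<bar>e (s+h) - e s\<bar> \<le> \<bar>h\<bar> * (2 * e s + 2 * c + 1)"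
      using est[of 1 s] by auto
    define C where "C = 2 * e s + 2 * c + 1"
    have C: "C > 0" using nn[of s] c by (simp add: C_def)
    have esG: "G s \<le> e s"
    proof (rule ccontr)
      assume "\<not> G s \<le> e s"
      define g where "g = G s - e s"
      have g: "g > 0" using \<open>\<not> G s \<le> e s\<close> by (simp add: g_def)
      define \<delta> where "\<delta> = min d1 (g / C)"
      have \<delta>: "\<delta> > 0" using d1 g C by (simp add: \<delta>_def)
      have "\<exists>r\<in>S. r < s + \<delta>" unfolding s_def using tS bdd \<delta>
        by (subst cInf_less_iff[symmetric]) auto
      then obtain r where r: "r \<in> S" "r < s + \<delta>" by blast
      have "s \<le> r" unfolding s_def by (rule cInf_lower[OF r(1) bdd])
      have "\<bar>e (s + (r - s)) - e s\<bar> \<le> \<bar>r - s\<bar> * C" using d1(2)[of "r - s"] r \<open>s \<le> r\<close> \<delta>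
        by (auto simp: C_def \<delta>_def)
      hence "e r \<le> e s + (r - s) * C" using \<open>s \<le> r\<close> by simp
      also have "(r - s) * C < g"
      proof -
        have "\<delta> \<le> g / C" by (simp add: \<delta>_def)
        hence "r - s < g / C" using r(2) by simp
        thus ?thesis using C by (simp add: pos_less_divide_eq)
      qed
      finally have "e r < G s" by (simp add: g_def)
      also have "G s \<le> G r" using Gmono \<open>s \<le> r\<close> by simp
      finally show False using r(1) by (simp add: S_def)
    qed
    have spos: "s > 0"
    proof (rule ccontr)
      assume "\<not> s > 0" hence "s = 0" using s0 by simp
      thus False using esG eta by (simp add: G_def K_def)
    qed
    define A where "A = G s + c"
    have A: "A > 0" using K by (simp add: A_def G_def)
    obtain d where d: "d > 0" "\<And>h. \<bar>h\<bar> < d \<Longrightarrow> \<bar>e (s+h) - e s\<bar> \<le> \<bar>h\<bar> * (2 * e s + 2 * c + A/2)"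
      using est[of "A/2" s] A by auto
    define h where "h = min (d/2) (min (s/2) (1/30))"
    have h: "h > 0" "h < d" "h < s" "h < 1/15" using d spos by (auto simp: h_def)
    have "\<bar>e (s + (-h)) - e s\<bar> \<le> h * (2 * e s + 2 * c + A/2)" using d(2)[of "-h"] h by simp
    hence "e s - h * (2 * e s + 2 * c + A/2) \<le> e (s - h)" by simp
    moreover have "G s - h * (2 * G s + 2 * c + A/2) \<le> e s - h * (2 * e s + 2 * c + A/2)"
    proof -
      have "0 \<le> (1 - 2*h) * (e s - G s)" using esG h by (intro mult_nonneg_nonneg) auto
      thus ?thesis by (simp add: algebra_simps)
    qed
    moreover have "G (s - h) < G s - h * (2 * G s + 2 * c + A/2)"
    proof -
      have "G (s - h) = A * exp (-3*h) - c"
        by (simp add: G_def A_def algebra_simps exp_diff exp_minus divide_inverse)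
      also have "\<dots> < A * (1 - 5/2*h) - c" using exp_small[OF h(1) h(4)] A by simp
      also have "\<dots> = G s - h * (2 * G s + 2 * c + A/2)" by (simp add: A_def algebra_simps)
      finally show ?thesis .
    qed
    ultimately have "G (s - h) < e (s - h)" by linarith
    moreover have "e (s - h) < G (s - h)" using below[of "s - h"] h by simp
    ultimately show False by simp
  qed
  show ?thesis
  proof (rule field_le_epsilon)
    fix \<epsilon> :: real assume \<epsilon>: "\<epsilon> > 0"
    have ex: "exp (3*t) > 0" by simp
    have "e t \<le> (e 0 + c + \<epsilon> / exp (3*t)) * exp (3*t) - c" using main[of "\<epsilon> / exp (3*t)"] \<epsilon> by simp
    also have "\<dots> = (e 0 + c) * exp (3*t) + \<epsilon> - c" using ex by (simp add: algebra_simps)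
    finally show "e t \<le> (e 0 + c) * exp (3*t) + \<epsilon>" using c by simp
  qed
qed


context prob_space begin

lemma abs_int_le:
  fixes g :: "'a \<Rightarrow> real"
  assumes "\<And>x. x \<in> space M \<Longrightarrow> \<bar>g x\<bar> \<le> B"
  shows "\<bar>integral\<^sup>L M g\<bar> \<le> B"
proof -
  have "\<bar>integral\<^sup>L M g\<bar> \<le> (\<integral>x. \<bar>g x\<bar> \<partial>M)" using integral_norm_bound[of M g] by simp
  also have "\<dots> \<le> (\<integral>x. B \<partial>M)"
    using assms by (intro integral_mono') (auto intro: order_trans[OF abs_ge_zero])
  finally show ?thesis by (simp add: prob_space)
qed

lemma abs_int_abs:
  fixes g :: "'a \<Rightarrow> real"
  shows "\<bar>integral\<^sup>L M g\<bar> \<le> (\<integral>x. \<bar>g x\<bar> \<partial>M)"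
  using integral_norm_bound[of M g] by simp

lemma abs_int_le_AE:
  fixes g :: "'a \<Rightarrow> real"
  assumes "AE x in M. \<bar>g x\<bar> \<le> B" "0 \<le> B"
  shows "\<bar>integral\<^sup>L M g\<bar> \<le> B"
proof -
  have "\<bar>integral\<^sup>L M g\<bar> \<le> (\<integral>x. \<bar>g x\<bar> \<partial>M)" using integral_norm_bound[of M g] by simp
  also have "\<dots> \<le> (\<integral>x. B \<partial>M)"
    using assms by (intro integral_mono_AE') auto
  finally show ?thesis by (simp add: prob_space)
qed

lemma graphon_meas:
  assumes "graphon M W" "x \<in> space M"
  shows "W x \<in> borel_measurable M"
proof -
  have "(\<lambda>(x, y). W x y) \<in> borel_measurable (M \<Otimes>\<^sub>M M)" using assms by (simp add: graphon_def)
  from measurable_compose[OF measurable_Pair1'[OF assms(2)] this] show ?thesis by simp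
qed

lemma rhs_meas:
  assumes "graphon M W" "v \<in> borel_measurable M"
  shows "kuramoto_rhs M W v \<in> borel_measurable M"
proof -
  have W[measurable]: "(\<lambda>(x, y). W x y) \<in> borel_measurable (M \<Otimes>\<^sub>M M)" using assms by (simp add: graphon_def)
  have v[measurable]: "v \<in> borel_measurable M" by fact
  have "(\<lambda>(x, y). W x y * sin (v y - v x)) \<in> borel_measurable (M \<Otimes>\<^sub>M M)"
  proof -
    have "(\<lambda>z. W (fst z) (snd z) * sin (v (snd z) - v (fst z))) \<in> borel_measurable (M \<Otimes>\<^sub>M M)"
      using W by (simp add: case_prod_beta') measurable
    thus ?thesis by (simp add: case_prod_beta')
  qed
  thus ?thesis unfolding kuramoto_rhs_def by (rule borel_measurable_lebesgue_integral)
qed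

lemma rhs_bound:
  assumes "graphon M W" "x \<in> space M"
  shows "\<bar>kuramoto_rhs M W v x\<bar> \<le> 1"
  unfolding kuramoto_rhs_def
proof (rule abs_int_le)
  fix y assume "y \<in> space M"
  hence "0 \<le> W x y" "W x y \<le> 1" using assms by (auto simp: graphon_def)
  thus "\<bar>W x y * sin (v y - v x)\<bar> \<le> 1"
    by (simp add: abs_mult) (meson abs_sin_le_one mult_le_one abs_ge_zero)
qed

lemma rhs_int:
  assumes "graphon M W" "v \<in> borel_measurable M"
  shows "integrable M (kuramoto_rhs M W v)"
  using rhs_bound[OF assms(1)] rhs_meas[OF assms]
  by (intro integrable_const_bound[where B=1]) auto


lemma sin_lip: "\<bar>sin a - sin b\<bar> \<le> \<bar>a - b\<bar>" for a b :: real
proof -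
  have "\<bar>sin a - sin b\<bar> = 2 * \<bar>sin ((a - b) / 2)\<bar> * \<bar>cos ((a + b) / 2)\<bar>"
    by (simp add: sin_diff_sin abs_mult)
  also have "\<dots> \<le> 2 * \<bar>(a - b) / 2\<bar> * 1"
    by (intro mult_mono abs_sin_x_le_abs_x) auto
  finally show ?thesis by simp
qed

lemma rhs_lip:
  assumes W: "graphon M W" and v[measurable]: "v \<in> borel_measurable M" and w[measurable]: "w \<in> borel_measurable M"
    and iv: "integrable M (\<lambda>x. v x - w x)"
  shows "(\<integral>x. \<bar>kuramoto_rhs M W v x - kuramoto_rhs M W w x\<bar> \<partial>M) \<le> 2 * (\<integral>x. \<bar>v x - w x\<bar> \<partial>M)"
proof -
  define N where "N = (\<integral>x. \<bar>v x - w x\<bar> \<partial>M)"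
  have Nn: "0 \<le> N" unfolding N_def by (rule Bochner_Integration.integral_nonneg) simp
  have pt: "\<bar>kuramoto_rhs M W v x - kuramoto_rhs M W w x\<bar> \<le> N + \<bar>v x - w x\<bar>" if x: "x \<in> space M" for x
  proof -
    have Wx[measurable]: "W x \<in> borel_measurable M" using graphon_meas[OF W x] .
    have Wb: "0 \<le> W x y \<and> W x y \<le> 1" if "y \<in> space M" for y using W x that by (auto simp: graphon_def)
    have i: "integrable M (\<lambda>y. W x y * sin (z y - z x))" if [measurable]: "z \<in> borel_measurable M" for z
    proof (rule integrable_const_bound[where B=1])
      show "AE y in M. norm (W x y * sin (z y - z x)) \<le> 1"
        using Wb by (auto simp: abs_mult intro!: mult_le_one)
    qed measurable
    have "kuramoto_rhs M W v x - kuramoto_rhs M W w x = (\<integral>y. W x y * sin (v y - v x) - W x y * sin (w y - w x) \<partial>M)"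
      unfolding kuramoto_rhs_def using i[OF v] i[OF w] by (simp add: integral_diff)
    also have "\<bar>\<dots>\<bar> \<le> (\<integral>y. \<bar>W x y * sin (v y - v x) - W x y * sin (w y - w x)\<bar> \<partial>M)"
      by (rule abs_int_abs)
    also have "\<dots> \<le> (\<integral>y. \<bar>v y - w y\<bar> + \<bar>v x - w x\<bar> \<partial>M)"
    proof (rule integral_mono')
      show "integrable M (\<lambda>y. \<bar>v y - w y\<bar> + \<bar>v x - w x\<bar>)" using iv by auto
      fix y assume y: "y \<in> space M"
      have "\<bar>W x y * sin (v y - v x) - W x y * sin (w y - w x)\<bar> = W x y * \<bar>sin (v y - v x) - sin (w y - w x)\<bar>"
        using Wb[OF y] by (simp add: abs_mult right_diff_distrib[symmetric])
      also have "\<dots> \<le> 1 * \<bar>(v y - v x) - (w y - w x)\<bar>"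
        using Wb[OF y] by (intro mult_mono sin_lip) auto
      also have "\<dots> \<le> \<bar>v y - w y\<bar> + \<bar>v x - w x\<bar>" by simp
      finally show "\<bar>W x y * sin (v y - v x) - W x y * sin (w y - w x)\<bar> \<le> \<bar>v y - w y\<bar> + \<bar>v x - w x\<bar>" .
    qed auto
    also have "\<dots> = N + \<bar>v x - w x\<bar>" using iv by (simp add: N_def prob_space)
    finally show ?thesis .
  qed
  have "(\<integral>x. \<bar>kuramoto_rhs M W v x - kuramoto_rhs M W w x\<bar> \<partial>M) \<le> (\<integral>x. N + \<bar>v x - w x\<bar> \<partial>M)"
    using pt iv Nn by (intro integral_mono' ) (auto intro: add_nonneg_nonneg)
  also have "\<dots> = 2 * N" using iv by (simp add: N_def prob_space)
  finally show ?thesis by (simp add: N_def)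
qed


lemma bound_mult: "\<bar>a\<bar> \<le> 1 \<Longrightarrow> \<bar>b\<bar> \<le> 1 \<Longrightarrow> \<bar>a * b\<bar> \<le> 1" for a b :: real
  by (simp add: abs_mult) (meson abs_ge_zero mult_le_one)

lemma graphon_bd: "graphon M W \<Longrightarrow> x \<in> space M \<Longrightarrow> y \<in> space M \<Longrightarrow> \<bar>W x y\<bar> \<le> 1"
  unfolding graphon_def by (simp add: abs_le_iff)

lemma ninf_bdd:
  assumes W1: "graphon M W1" and W2: "graphon M W2"
  shows "bdd_above ((\<lambda>h::'a\<Rightarrow>real. \<integral>x. \<bar>\<integral>y. (W1 x y - W2 x y) * h y \<partial>M\<bar> \<partial>M) ` {h. h \<in> borel_measurable M \<and> (AE y in M. \<bar>h y\<bar> \<le> 1)})"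
proof (rule bdd_aboveI2)
  fix h :: "'a \<Rightarrow> real" assume "h \<in> {h. h \<in> borel_measurable M \<and> (AE y in M. \<bar>h y\<bar> \<le> 1)}"
  hence h: "AE y in M. \<bar>h y\<bar> \<le> 1" by simp
  have inner: "\<bar>\<integral>y. (W1 x y - W2 x y) * h y \<partial>M\<bar> \<le> 1" if x: "x \<in> space M" for x
  proof (rule abs_int_le_AE)
    show "AE y in M. \<bar>(W1 x y - W2 x y) * h y\<bar> \<le> 1"
      using h AE_space
    proof eventually_elim
      case (elim y)
      have "0 \<le> W1 x y" "W1 x y \<le> 1" "0 \<le> W2 x y" "W2 x y \<le> 1" using W1 W2 x elim(2) by (auto simp: graphon_def)
      hence "\<bar>W1 x y - W2 x y\<bar> \<le> 1" by (simp add: abs_le_iff)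
      thus ?case using elim(1) by (simp add: abs_mult) (meson abs_ge_zero mult_le_one)
    qed
  qed simp
  have "\<bar>\<integral>x. \<bar>\<integral>y. (W1 x y - W2 x y) * h y \<partial>M\<bar> \<partial>M\<bar> \<le> 1"
    by (rule abs_int_le) (simp add: inner)
  thus "(\<integral>x. \<bar>\<integral>y. (W1 x y - W2 x y) * h y \<partial>M\<bar> \<partial>M) \<le> 1" by (simp add: abs_le_iff)
qed

lemma ninf_upper:
  fixes h :: "'a \<Rightarrow> real"
  assumes W1: "graphon M W1" and W2: "graphon M W2" and h: "h \<in> borel_measurable M" "\<And>y. y \<in> space M \<Longrightarrow> \<bar>h y\<bar> \<le> 1"
  shows "(\<integral>x. \<bar>\<integral>y. (W1 x y - W2 x y) * h y \<partial>M\<bar> \<partial>M) \<le> norm_inf_1 M (\<lambda>x y. W1 x y - W2 x y)"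
  unfolding norm_inf_1_def
  by (rule cSUP_upper[OF _ ninf_bdd[OF W1 W2]]) (use h in auto)

lemma ninf_nonneg:
  assumes W1: "graphon M W1" and W2: "graphon M W2"
  shows "0 \<le> norm_inf_1 M (\<lambda>x y. W1 x y - W2 x y)"
  using ninf_upper[OF W1 W2, of "\<lambda>_. 0"] by simp

lemma rhs_diff:
  assumes W1: "graphon M W1" and W2: "graphon M W2" and v[measurable]: "v \<in> borel_measurable M"
  shows "(\<integral>x. \<bar>kuramoto_rhs M W1 v x - kuramoto_rhs M W2 v x\<bar> \<partial>M) \<le> 2 * norm_inf_1 M (\<lambda>x y. W1 x y - W2 x y)"
proof -
  have P1[measurable]: "(\<lambda>(x, y). W1 x y) \<in> borel_measurable (M \<Otimes>\<^sub>M M)" using W1 by (simp add: graphon_def)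
  have P2[measurable]: "(\<lambda>(x, y). W2 x y) \<in> borel_measurable (M \<Otimes>\<^sub>M M)" using W2 by (simp add: graphon_def)
  define I where "I g x = (\<integral>y. (W1 x y - W2 x y) * g (v y) \<partial>M)" for g :: "real \<Rightarrow> real" and x
  have Imeas: "I g \<in> borel_measurable M" if [measurable]: "g \<in> borel_measurable borel" for g
  proof -
    have "(\<lambda>z. (W1 (fst z) (snd z) - W2 (fst z) (snd z)) * g (v (snd z))) \<in> borel_measurable (M \<Otimes>\<^sub>M M)"
      using P1 P2 by (simp add: case_prod_beta') measurable
    hence "(\<lambda>(x, y). (W1 x y - W2 x y) * g (v y)) \<in> borel_measurable (M \<Otimes>\<^sub>M M)"
      by (simp add: case_prod_beta')
    thus ?thesis unfolding I_def[abs_def] by (rule borel_measurable_lebesgue_integral)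
  qed
  have Kb: "\<bar>W1 x y - W2 x y\<bar> \<le> 1" if "x \<in> space M" "y \<in> space M" for x y
  proof -
    have "0 \<le> W1 x y" "W1 x y \<le> 1" "0 \<le> W2 x y" "W2 x y \<le> 1" using W1 W2 that by (auto simp: graphon_def)
    thus ?thesis by (simp add: abs_le_iff)
  qed
  have Iint: "integrable M (\<lambda>x. \<bar>I g x\<bar>)" if [measurable]: "g \<in> borel_measurable borel" and gb: "\<And>r. \<bar>g r\<bar> \<le> 1" for g
  proof (rule integrable_const_bound[where B=1])
    have "Imeas": "I g \<in> borel_measurable M" using Imeas by simp
    show "(\<lambda>x. \<bar>I g x\<bar>) \<in> borel_measurable M" using Imeas by measurable
    show "AE x in M. norm \<bar>I g x\<bar> \<le> 1"
    proof (rule AE_I2)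
      fix x assume x: "x \<in> space M"
      have "\<bar>I g x\<bar> \<le> 1" unfolding I_def
        by (rule abs_int_le) (use Kb[OF x] gb in \<open>auto simp: abs_mult intro: mult_le_one\<close>)
      thus "norm \<bar>I g x\<bar> \<le> 1" by simp
    qed
  qed
  have Iup: "(\<integral>x. \<bar>I g x\<bar> \<partial>M) \<le> norm_inf_1 M (\<lambda>x y. W1 x y - W2 x y)"
    if [measurable]: "g \<in> borel_measurable borel" and gb: "\<And>r. \<bar>g r\<bar> \<le> 1" for g
    unfolding I_def using ninf_upper[OF W1 W2, of "\<lambda>y. g (v y)"] gb by auto
  have ms: "(sin :: real \<Rightarrow> real) \<in> borel_measurable borel"
    by (rule borel_measurable_continuous_onI) (intro continuous_intros)
  have mc: "(cos :: real \<Rightarrow> real) \<in> borel_measurable borel"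
    by (rule borel_measurable_continuous_onI) (intro continuous_intros)
  have isn: "integrable M (\<lambda>x. \<bar>I sin x\<bar>)" by (rule Iint[OF ms]) simp
  have ic: "integrable M (\<lambda>x. \<bar>I cos x\<bar>)" by (rule Iint[OF mc]) simp
  have pt: "\<bar>kuramoto_rhs M W1 v x - kuramoto_rhs M W2 v x\<bar> \<le> \<bar>I sin x\<bar> + \<bar>I cos x\<bar>" if x: "x \<in> space M" for x
  proof -
    have m1[measurable]: "W1 x \<in> borel_measurable M" using graphon_meas[OF W1 x] .
    have m2[measurable]: "W2 x \<in> borel_measurable M" using graphon_meas[OF W2 x] .
    have bi: "integrable M (\<lambda>y. (W1 x y - W2 x y) * g y)" if [measurable]: "g \<in> borel_measurable M" and gb: "\<And>y. \<bar>g y\<bar> \<le> 1" for g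
    proof (rule integrable_const_bound[where B=1])
      show "AE y in M. norm ((W1 x y - W2 x y) * g y) \<le> 1"
      proof (rule AE_I2)
        fix y assume y: "y \<in> space M"
        show "norm ((W1 x y - W2 x y) * g y) \<le> 1" using bound_mult[OF Kb[OF x y] gb[of y]] by simp
      qed
    qed measurable
    have bi1: "integrable M (\<lambda>y. W1 x y * g y)" if [measurable]: "g \<in> borel_measurable M" and gb: "\<And>y. \<bar>g y\<bar> \<le> 1" for g
    proof (rule integrable_const_bound[where B=1])
      show "AE y in M. norm (W1 x y * g y) \<le> 1"
      proof (rule AE_I2)
        fix y assume y: "y \<in> space M"
        show "norm (W1 x y * g y) \<le> 1" using bound_mult[OF graphon_bd[OF W1 x y] gb[of y]] by simp
      qed
    qed measurable
    have bi2: "integrable M (\<lambda>y. W2 x y * g y)" if [measurable]: "g \<in> borel_measurable M" and gb: "\<And>y. \<bar>g y\<bar> \<le> 1" for g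
    proof (rule integrable_const_bound[where B=1])
      show "AE y in M. norm (W2 x y * g y) \<le> 1"
      proof (rule AE_I2)
        fix y assume y: "y \<in> space M"
        show "norm (W2 x y * g y) \<le> 1" using bound_mult[OF graphon_bd[OF W2 x y] gb[of y]] by simp
      qed
    qed measurable
    have "kuramoto_rhs M W1 v x - kuramoto_rhs M W2 v x = (\<integral>y. (W1 x y - W2 x y) * sin (v y - v x) \<partial>M)"
    proof -
      have "integrable M (\<lambda>y. W1 x y * sin (v y - v x))" by (rule bi1) auto
      moreover have "integrable M (\<lambda>y. W2 x y * sin (v y - v x))" by (rule bi2) auto
      ultimately show ?thesis unfolding kuramoto_rhs_def left_diff_distrib by (simp add: integral_diff)
    qed
    also have "\<dots> = (\<integral>y. cos (v x) * ((W1 x y - W2 x y) * sin (v y)) - sin (v x) * ((W1 x y - W2 x y) * cos (v y)) \<partial>M)"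
      by (rule Bochner_Integration.integral_cong) (auto simp: sin_diff algebra_simps)
    also have "\<dots> = cos (v x) * I sin x - sin (v x) * I cos x"
    proof -
      have "integrable M (\<lambda>y. cos (v x) * ((W1 x y - W2 x y) * sin (v y)))"
        by (intro integrable_mult_right bi) auto
      moreover have "integrable M (\<lambda>y. sin (v x) * ((W1 x y - W2 x y) * cos (v y)))"
        by (intro integrable_mult_right bi) auto
      ultimately show ?thesis unfolding I_def by (simp add: integral_diff)
    qed
    also have "\<bar>\<dots>\<bar> \<le> \<bar>I sin x\<bar> + \<bar>I cos x\<bar>"
    proof -
      have "\<bar>cos (v x) * I sin x\<bar> \<le> \<bar>I sin x\<bar>" by (simp add: abs_mult mult_left_le_one_le)
      moreover have "\<bar>sin (v x) * I cos x\<bar> \<le> \<bar>I cos x\<bar>" by (simp add: abs_mult mult_left_le_one_le)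
      ultimately show ?thesis by linarith
    qed
    finally show ?thesis .
  qed
  have "(\<integral>x. \<bar>kuramoto_rhs M W1 v x - kuramoto_rhs M W2 v x\<bar> \<partial>M) \<le> (\<integral>x. \<bar>I sin x\<bar> + \<bar>I cos x\<bar> \<partial>M)"
    using pt isn ic by (intro integral_mono') auto
  also have "\<dots> = (\<integral>x. \<bar>I sin x\<bar> \<partial>M) + (\<integral>x. \<bar>I cos x\<bar> \<partial>M)"
    using isn ic by (simp add: Bochner_Integration.integral_add)
  also have "\<dots> \<le> 2 * norm_inf_1 M (\<lambda>x y. W1 x y - W2 x y)"
    using Iup[OF ms] Iup[OF mc] by simp
  finally show ?thesis .
qed


lemma N1_tri:
  fixes f g :: "'a \<Rightarrow> real"
  assumes "integrable M f" "integrable M g"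
  shows "(\<integral>x. \<bar>f x + g x\<bar> \<partial>M) \<le> (\<integral>x. \<bar>f x\<bar> \<partial>M) + (\<integral>x. \<bar>g x\<bar> \<partial>M)"
proof -
  have "(\<integral>x. \<bar>f x + g x\<bar> \<partial>M) \<le> (\<integral>x. \<bar>f x\<bar> + \<bar>g x\<bar> \<partial>M)"
    using assms by (intro integral_mono) auto
  also have "\<dots> = (\<integral>x. \<bar>f x\<bar> \<partial>M) + (\<integral>x. \<bar>g x\<bar> \<partial>M)"
    using assms by (simp add: Bochner_Integration.integral_add)
  finally show ?thesis .
qed

lemma est_lemma:
  assumes W1: "graphon M W1" and W2: "graphon M W2"
    and sa: "kuramoto_solution M W1 a0 a" and sb: "kuramoto_solution M W2 b0 b" and eps: "\<epsilon> > 0"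
  shows "\<exists>d>0. \<forall>h. \<bar>h\<bar> < d \<longrightarrow> \<bar>l1_dist M (a (t+h)) (b (t+h)) - l1_dist M (a t) (b t)\<bar>
            \<le> \<bar>h\<bar> * (2 * l1_dist M (a t) (b t) + 2 * norm_inf_1 M (\<lambda>x y. W1 x y - W2 x y) + \<epsilon>)"
proof -
  define F1 where "F1 = kuramoto_rhs M W1 (a t)"
  define F2 where "F2 = kuramoto_rhs M W2 (b t)"
  define G where "G = kuramoto_rhs M W1 (b t)"
  define \<delta> where "\<delta> = norm_inf_1 M (\<lambda>x y. W1 x y - W2 x y)"
  define e where "e s = l1_dist M (a s) (b s)" for s
  have ia: "integrable M (a s)" and ib: "integrable M (b s)" for s using sa sb by (auto simp: kuramoto_solution_def)
  have ma[measurable]: "a s \<in> borel_measurable M" and mb[measurable]: "b s \<in> borel_measurable M" for s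
    using ia ib by auto
  have iF1: "integrable M F1" unfolding F1_def by (rule rhs_int[OF W1 ma])
  have iF2: "integrable M F2" unfolding F2_def by (rule rhs_int[OF W2 mb])
  have iG: "integrable M G" unfolding G_def by (rule rhs_int[OF W1 mb])
  have Da: "((\<lambda>h. l1_dist M (\<lambda>x. (a (t + h) x - a t x) / h) F1) \<longlongrightarrow> 0) (at 0)"
    using sa by (simp add: kuramoto_solution_def F1_def)
  have Db: "((\<lambda>h. l1_dist M (\<lambda>x. (b (t + h) x - b t x) / h) F2) \<longlongrightarrow> 0) (at 0)"
    using sb by (simp add: kuramoto_solution_def F2_def)
  have "eventually (\<lambda>h. l1_dist M (\<lambda>x. (a (t + h) x - a t x) / h) F1 < \<epsilon>/2) (at 0)"
    by (rule order_tendstoD(2)[OF Da]) (use eps in simp)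
  moreover have "eventually (\<lambda>h. l1_dist M (\<lambda>x. (b (t + h) x - b t x) / h) F2 < \<epsilon>/2) (at 0)"
    by (rule order_tendstoD(2)[OF Db]) (use eps in simp)
  ultimately have "eventually (\<lambda>h. l1_dist M (\<lambda>x. (a (t + h) x - a t x) / h) F1 < \<epsilon>/2 \<and>
      l1_dist M (\<lambda>x. (b (t + h) x - b t x) / h) F2 < \<epsilon>/2) (at 0)"
    by (rule eventually_conj)
  then obtain d where d: "d > 0" and dP: "\<And>h. h \<noteq> 0 \<Longrightarrow> dist h 0 < d \<Longrightarrow>
      l1_dist M (\<lambda>x. (a (t + h) x - a t x) / h) F1 < \<epsilon>/2 \<and>
      l1_dist M (\<lambda>x. (b (t + h) x - b t x) / h) F2 < \<epsilon>/2"
    unfolding eventually_at by blast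
  have LF: "(\<integral>x. \<bar>F1 x - F2 x\<bar> \<partial>M) \<le> 2 * e t + 2 * \<delta>"
  proof -
    have "(\<integral>x. \<bar>F1 x - F2 x\<bar> \<partial>M) = (\<integral>x. \<bar>(F1 x - G x) + (G x - F2 x)\<bar> \<partial>M)" by simp
    also have "\<dots> \<le> (\<integral>x. \<bar>F1 x - G x\<bar> \<partial>M) + (\<integral>x. \<bar>G x - F2 x\<bar> \<partial>M)"
      by (rule N1_tri) (use iF1 iF2 iG in auto)
    also have "(\<integral>x. \<bar>F1 x - G x\<bar> \<partial>M) \<le> 2 * e t"
      unfolding F1_def G_def e_def l1_dist_def by (rule rhs_lip[OF W1 ma mb]) (use ia ib in auto)
    also have "(\<integral>x. \<bar>G x - F2 x\<bar> \<partial>M) \<le> 2 * \<delta>"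
      unfolding G_def F2_def \<delta>_def by (rule rhs_diff[OF W1 W2 mb])
    finally show ?thesis by simp
  qed
  show ?thesis unfolding \<delta>_def[symmetric]
  proof (intro exI[of _ d] conjI allI impI d)
    fix h :: real assume hd: "\<bar>h\<bar> < d"
    show "\<bar>l1_dist M (a (t+h)) (b (t+h)) - l1_dist M (a t) (b t)\<bar> \<le> \<bar>h\<bar> * (2 * l1_dist M (a t) (b t) + 2 * \<delta> + \<epsilon>)"
    proof (cases "h = 0")
      case True thus ?thesis by simp
    next
      case h0: False
      define qa where "qa x = (a (t + h) x - a t x) / h" for x
      define qb where "qb x = (b (t + h) x - b t x) / h" for x
      define A where "A x = a t x - b t x" for x
      define B where "B x = qa x - qb x" for x
      have iqa: "integrable M qa" unfolding qa_def using ia by auto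
      have iqb: "integrable M qb" unfolding qb_def using ib by auto
      have iA: "integrable M A" unfolding A_def using ia ib by auto
      have iB: "integrable M B" unfolding B_def using iqa iqb by auto
      have iB': "integrable M (\<lambda>x. h * B x)" using iB by auto
      have eq: "a (t+h) x - b (t+h) x = A x + h * B x" for x
        using h0 by (simp add: A_def B_def qa_def qb_def field_simps)
      have ds: "l1_dist M qa F1 < \<epsilon>/2" "l1_dist M qb F2 < \<epsilon>/2"
        using dP[of h] h0 hd by (auto simp: qa_def[abs_def] qb_def[abs_def])
      have NB: "(\<integral>x. \<bar>B x\<bar> \<partial>M) \<le> \<epsilon> + 2 * e t + 2 * \<delta>"
      proof -
        have "(\<integral>x. \<bar>B x\<bar> \<partial>M) = (\<integral>x. \<bar>(qa x - F1 x) + ((F2 x - qb x) + (F1 x - F2 x))\<bar> \<partial>M)"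
          by (simp add: B_def)
        also have "\<dots> \<le> (\<integral>x. \<bar>qa x - F1 x\<bar> \<partial>M) + (\<integral>x. \<bar>(F2 x - qb x) + (F1 x - F2 x)\<bar> \<partial>M)"
          by (rule N1_tri) (use iqa iqb iF1 iF2 in auto)
        also have "(\<integral>x. \<bar>(F2 x - qb x) + (F1 x - F2 x)\<bar> \<partial>M) \<le> (\<integral>x. \<bar>F2 x - qb x\<bar> \<partial>M) + (\<integral>x. \<bar>F1 x - F2 x\<bar> \<partial>M)"
          by (rule N1_tri) (use iqa iqb iF1 iF2 in auto)
        also have "(\<integral>x. \<bar>F2 x - qb x\<bar> \<partial>M) = l1_dist M qb F2" unfolding l1_dist_def by (simp add: abs_minus_commute)
        also have "(\<integral>x. \<bar>qa x - F1 x\<bar> \<partial>M) = l1_dist M qa F1" unfolding l1_dist_def by simp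
        finally show ?thesis using ds LF by simp
      qed
      have hB: "(\<integral>x. \<bar>h * B x\<bar> \<partial>M) = \<bar>h\<bar> * (\<integral>x. \<bar>B x\<bar> \<partial>M)" by (simp add: abs_mult)
      have e1: "l1_dist M (a (t+h)) (b (t+h)) = (\<integral>x. \<bar>A x + h * B x\<bar> \<partial>M)" unfolding l1_dist_def eq ..
      have e0: "l1_dist M (a t) (b t) = (\<integral>x. \<bar>A x\<bar> \<partial>M)" unfolding l1_dist_def A_def ..
      have up: "(\<integral>x. \<bar>A x + h * B x\<bar> \<partial>M) \<le> (\<integral>x. \<bar>A x\<bar> \<partial>M) + \<bar>h\<bar> * (\<integral>x. \<bar>B x\<bar> \<partial>M)"
        using N1_tri[OF iA iB'] hB by simp
      have lo: "(\<integral>x. \<bar>A x\<bar> \<partial>M) \<le> (\<integral>x. \<bar>A x + h * B x\<bar> \<partial>M) + \<bar>h\<bar> * (\<integral>x. \<bar>B x\<bar> \<partial>M)"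
      proof -
        have iAB: "integrable M (\<lambda>x. A x + h * B x)" using iA iB' by auto
        have iB'': "integrable M (\<lambda>x. - (h * B x))" using iB' by auto
        have "(\<integral>x. \<bar>A x\<bar> \<partial>M) = (\<integral>x. \<bar>(A x + h * B x) + - (h * B x)\<bar> \<partial>M)" by simp
        also have "\<dots> \<le> (\<integral>x. \<bar>A x + h * B x\<bar> \<partial>M) + (\<integral>x. \<bar>- (h * B x)\<bar> \<partial>M)"
          by (rule N1_tri[OF iAB iB''])
        finally show ?thesis using hB by simp
      qed
      have "\<bar>l1_dist M (a (t+h)) (b (t+h)) - l1_dist M (a t) (b t)\<bar> \<le> \<bar>h\<bar> * (\<integral>x. \<bar>B x\<bar> \<partial>M)"
        unfolding e1 e0 using up lo by linarith
      also have "\<dots> \<le> \<bar>h\<bar> * (2 * l1_dist M (a t) (b t) + 2 * \<delta> + \<epsilon>)"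
        using NB by (intro mult_left_mono) (auto simp: e_def)
      finally show ?thesis .
    qed
  qed
qed

end

theorem corollary6p2:
  fixes M :: "'a measure"
    and Wn :: "nat \<Rightarrow> 'a \<Rightarrow> 'a \<Rightarrow> real" and W :: "'a \<Rightarrow> 'a \<Rightarrow> real"
    and u0n :: "nat \<Rightarrow> 'a \<Rightarrow> real" and u0 :: "'a \<Rightarrow> real"
    and un :: "nat \<Rightarrow> real \<Rightarrow> 'a \<Rightarrow> real" and u :: "real \<Rightarrow> 'a \<Rightarrow> real"
  assumes "prob_space M"
    and "\<And>n. graphon M (Wn n)"
    and "graphon M W"
    and "(\<lambda>n. norm_inf_1 M (\<lambda>x y. Wn n x y - W x y)) \<longlonglongrightarrow> 0"
    and "\<And>n. integrable M (u0n n)"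
    and "integrable M u0"
    and "(\<lambda>n. l1_dist M (u0n n) u0) \<longlonglongrightarrow> 0"
    and "\<And>n. kuramoto_solution M (Wn n) (u0n n) (un n)"
    and "kuramoto_solution M W u0 u"
  shows "(\<forall>t. (\<lambda>n. l1_dist M (un n t) (u t)) \<longlonglongrightarrow> 0) \<and>
         (\<forall>T. \<forall>\<epsilon>>0. \<exists>N. \<forall>n\<ge>N. \<forall>t\<in>{-T..T}. l1_dist M (un n t) (u t) < \<epsilon>)"
proof -
  interpret P: prob_space M by fact
  define \<delta> where "\<delta> n = norm_inf_1 M (\<lambda>x y. Wn n x y - W x y)" for n
  define e where "e n t = l1_dist M (un n t) (u t)" for n t
  define a where "a n = e n 0 + \<delta> n" for n
  have enn: "0 \<le> e n t" for n t
    unfolding e_def l1_dist_def by (rule Bochner_Integration.integral_nonneg) simp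
  have \<delta>nn: "0 \<le> \<delta> n" for n
    using P.ninf_nonneg[OF assms(2)[of n] assms(3)] by (simp add: \<delta>_def)
  have est: "\<exists>d>0. \<forall>h. \<bar>h\<bar> < d \<longrightarrow> \<bar>e n (t+h) - e n t\<bar> \<le> \<bar>h\<bar> * (2 * e n t + 2 * \<delta> n + \<epsilon>)"
    if "\<epsilon> > 0" for n t \<epsilon>
    using P.est_lemma[OF assms(2)[of n] assms(3) assms(8)[of n] assms(9) that, of t]
    by (simp add: e_def \<delta>_def)
  have bound: "e n t \<le> a n * exp (3 * \<bar>t\<bar>)" for n t
  proof (cases "0 \<le> t")
    case True
    have "e n t \<le> (e n 0 + \<delta> n) * exp (3 * t)"
      by (rule gronwall_fwd[OF enn \<delta>nn est True])
    thus ?thesis using True by (simp add: a_def)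
  next
    case False
    define f where "f s = e n (-s)" for s
    have "f (-t) \<le> (f 0 + \<delta> n) * exp (3 * (-t))"
    proof (rule gronwall_fwd[OF _ \<delta>nn])
      show "0 \<le> f s" for s by (simp add: f_def enn)
      show "0 \<le> -t" using False by simp
      fix s \<epsilon> :: real assume "\<epsilon> > 0"
      then obtain d where d: "d > 0" "\<And>h. \<bar>h\<bar> < d \<Longrightarrow> \<bar>e n (-s+h) - e n (-s)\<bar> \<le> \<bar>h\<bar> * (2 * e n (-s) + 2 * \<delta> n + \<epsilon>)"
        using est[of \<epsilon> n "-s"] by blast
      show "\<exists>d>0. \<forall>h. \<bar>h\<bar> < d \<longrightarrow> \<bar>f (s+h) - f s\<bar> \<le> \<bar>h\<bar> * (2 * f s + 2 * \<delta> n + \<epsilon>)"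
      proof (intro exI[of _ d] conjI allI impI d(1))
        fix h :: real assume "\<bar>h\<bar> < d"
        thus "\<bar>f (s+h) - f s\<bar> \<le> \<bar>h\<bar> * (2 * f s + 2 * \<delta> n + \<epsilon>)"
          using d(2)[of "-h"] by (simp add: f_def)
      qed
    qed
    thus ?thesis using False by (simp add: f_def a_def)
  qed
  have e0: "e n 0 = l1_dist M (u0n n) u0" for n
  proof -
    have m1: "un n 0 \<in> borel_measurable M" "u 0 \<in> borel_measurable M"
      using assms(8)[of n] assms(9) by (auto simp: kuramoto_solution_def)
    have m2: "u0n n \<in> borel_measurable M" "u0 \<in> borel_measurable M"
      using assms(5)[of n] assms(6) by auto
    have ae1: "AE x in M. un n 0 x = u0n n x" and ae2: "AE x in M. u 0 x = u0 x"
      using assms(8)[of n] assms(9) by (auto simp: kuramoto_solution_def)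
    show ?thesis unfolding e_def l1_dist_def
    proof (rule integral_cong_AE)
      show "AE x in M. \<bar>un n 0 x - u 0 x\<bar> = \<bar>u0n n x - u0 x\<bar>"
        using ae1 ae2 by eventually_elim simp
    qed (use m1 m2 in auto)
  qed
  have a_lim: "a \<longlonglongrightarrow> 0"
  proof -
    have "(\<lambda>n. l1_dist M (u0n n) u0 + \<delta> n) \<longlonglongrightarrow> 0 + 0"
      using tendsto_add[OF assms(7) assms(4)] by (simp add: \<delta>_def)
    moreover have "a = (\<lambda>n. l1_dist M (u0n n) u0 + \<delta> n)" by (auto simp: a_def e0)
    ultimately show ?thesis by simp
  qed
  have ann: "0 \<le> a n" for n using enn[of n 0] \<delta>nn[of n] by (simp add: a_def)
  show ?thesis
  proof (intro conjI allI impI)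
    fix t :: real
    have lim: "(\<lambda>n. a n * exp (3 * \<bar>t\<bar>)) \<longlonglongrightarrow> 0"
      using tendsto_mult[OF a_lim tendsto_const[of "exp (3 * \<bar>t\<bar>)"]] by simp
    show "(\<lambda>n. l1_dist M (un n t) (u t)) \<longlonglongrightarrow> 0"
    proof (rule tendsto_sandwich[OF _ _ tendsto_const lim])
      show "\<forall>\<^sub>F n in sequentially. 0 \<le> l1_dist M (un n t) (u t)" using enn by (simp add: e_def)
      show "\<forall>\<^sub>F n in sequentially. l1_dist M (un n t) (u t) \<le> a n * exp (3 * \<bar>t\<bar>)"
        using bound by (simp add: e_def)
    qed
  next
    fix T \<epsilon> :: real assume \<epsilon>: "\<epsilon> > 0"
    have "eventually (\<lambda>n. a n < \<epsilon> / exp (3 * \<bar>T\<bar>)) sequentially"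
      by (rule order_tendstoD(2)[OF a_lim]) (use \<epsilon> in simp)
    then obtain N where N: "\<And>n. n \<ge> N \<Longrightarrow> a n < \<epsilon> / exp (3 * \<bar>T\<bar>)"
      by (auto simp: eventually_sequentially)
    show "\<exists>N. \<forall>n\<ge>N. \<forall>t\<in>{-T..T}. l1_dist M (un n t) (u t) < \<epsilon>"
    proof (intro exI[of _ N] allI impI ballI)
      fix n t assume n: "n \<ge> N" and t: "t \<in> {-T..T}"
      have "\<bar>t\<bar> \<le> \<bar>T\<bar>" using t by auto
      have "l1_dist M (un n t) (u t) \<le> a n * exp (3 * \<bar>t\<bar>)" using bound by (simp add: e_def)
      also have "\<dots> \<le> a n * exp (3 * \<bar>T\<bar>)" using ann \<open>\<bar>t\<bar> \<le> \<bar>T\<bar>\<close> by (intro mult_left_mono) auto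
      also have "\<dots> < \<epsilon>" using N[OF n] by (simp add: field_simps)
      finally show "l1_dist M (un n t) (u t) < \<epsilon>" .
    qed
  qed
qed

end
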